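(* Let $q$ be a power of a prime $p$, $M,N$ positive integers coprime to $p$, $\lambda_1,\lambda_2\in\mathbb{F}_q^{\ast}$, and let $\mathbb{F}_{q^m}$ be an extension field containing $\gamma,\beta$ with $\gamma^M=\lambda_1$, $\beta^N=\lambda_2$, a primitive $M$-th root of unity $\zeta_1$ and a primitive $N$-th root of unity $\zeta_2$. Let $\Omega=\{(i,j):0\le i\le M-1,\ 0\le j\le N-1\}$. Let $\mathcal{C}$ be a 2-D $(\lambda_1,\lambda_2)$-constacyclic code of area $M\times N$ over $\mathbb{F}_q$ with minimum distance $d$ and common zero set $V_c$. Let $\widetilde{\mathbb{E}}=\{(\theta,\phi)\in\Omega:(\gamma\zeta_1^{\theta},\beta\zeta_2^{\phi})\in V_c\}$ and write $\Omega\setminus\widetilde{\mathbb{E}}=\{(\theta_1,\phi_1),\dots,(\theta_{s'},\phi_{s'})\}$, $s'=MN-|V_c|$. Let $c\in\mathcal{C}$, and let $e$ be an $M\times N$ array over $\mathbb{F}_q$ whose set of nonzero positions $\mathbb{E}$ satisfies $1\le t:=|\mathbb{E}|\le\lfloor(d-1)/2\rfloor$; write $\Omega\setminus\mathbb{E}=\{(i_1,j_1),\dots,(i_{t'},j_{t'})\}$. Let $r=c+e$, let $R=(R_{\theta,\phi})$ with $R_{\theta,\phi}=\sum_{i,j}r_{i,j}(\gamma\zeta_1^{\theta})^i(\beta\zeta_2^{\phi})^j$, and $R(x,y)=\sum_{(\theta,\phi)\in\Omega}R_{\theta,\phi}x^{\theta}y^{\phi}$. Then the linear system $AX=B$ in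 the unknowns $X=(X_1,\dots,X_{s'})^T$, where $A$ is the $t'\times s'$ matrix with entries $A_{l,k}=\zeta_1^{-i_l\theta_k}\zeta_2^{-j_l\phi_k}$ and $B=(R(\zeta_1^{-i_1},\zeta_2^{-j_1}),\dots,R(\zeta_1^{-i_{t'}},\zeta_2^{-j_{t'}}))^T$, has a unique solution (namely $X_k=C_{\theta_k,\phi_k}$, the entries of the spectrum of $c$ outside the spectral nulls).
   Context: An $M\times N$ array $c=(c_{i,j})$ over $\mathbb{F}_q$ is identified with $c(x,y)=\sum_{i,j}c_{i,j}x^iy^j$; its spectrum is $C_{\theta,\phi}=\sum_{i,j}c_{i,j}(\gamma\zeta_1^{\theta})^i(\beta\zeta_2^{\phi})^j$. A 2-D $(\lambda_1,\lambda_2)$-constacyclic code of area $M\times N$ over $\mathbb{F}_q$ is an $\mathbb{F}_q$-linear subspace of $M\times N$ arrays closed under the column $\lambda_1$-constacyclic shift (row $0$ becomes $\lambda_1$ times row $M-1$, row $i$ becomes row $i-1$) and the row $\lambda_2$-constacyclic shift (column $0$ becomes $\lambda_2$ times column $N-1$, column $j$ becomes column $j-1$); equivalently an ideal of $\mathbb{F}_q[x,y]/\langle x^M-\lambda_1,y^N-\lambda_2\rangle$. Let $V_\circ=\{(a,b): a^M=\lambda_1,\ b^N=\lambda_2\}$ and $V_1$ the set of common roots of all $c(x,y)$, $c\in\mathcal{C}$; the common zero set is $V_c=V_\circ\cap V_1$. The minimum distance is the least Hamming weight of a nonzero codeword. *)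

theory Defs
  imports "Jordan_Normal_Form.Matrix"
begin

definition arrays :: "nat \<Rightarrow> nat \<Rightarrow> (nat \<Rightarrow> nat \<Rightarrow> 'a::zero) set" where
  "arrays M N = {a. \<forall>i j. (M \<le> i \<or> N \<le> j) \<longrightarrow> a i j = 0}"

definition Omega :: "nat \<Rightarrow> nat \<Rightarrow> (nat \<times> nat) set" where
  "Omega M N = {0..<M} \<times> {0..<N}"

definition col_shift :: "nat \<Rightarrow> nat \<Rightarrow> 'a::field \<Rightarrow> (nat \<Rightarrow> nat \<Rightarrow> 'a) \<Rightarrow> (nat \<Rightarrow> nat \<Rightarrow> 'a)" where
  "col_shift M N l a = (\<lambda>i j. if i < M \<and> j < N then
      (if i = 0 then l * a (M - 1) j else a (i - 1) j) else 0)"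

definition row_shift :: "nat \<Rightarrow> nat \<Rightarrow> 'a::field \<Rightarrow> (nat \<Rightarrow> nat \<Rightarrow> 'a) \<Rightarrow> (nat \<Rightarrow> nat \<Rightarrow> 'a)" where
  "row_shift M N l a = (\<lambda>i j. if i < M \<and> j < N then
      (if j = 0 then l * a i (N - 1) else a i (j - 1)) else 0)"

definition constacyclic_code_2D ::
  "nat \<Rightarrow> nat \<Rightarrow> 'a::field \<Rightarrow> 'a \<Rightarrow> (nat \<Rightarrow> nat \<Rightarrow> 'a) set \<Rightarrow> bool" where
  "constacyclic_code_2D M N l1 l2 C \<longleftrightarrow>
     C \<subseteq> arrays M N \<and>
     (\<lambda>i j. 0) \<in> C \<and>
     (\<forall>a\<in>C. \<forall>b\<in>C. (\<lambda>i j. a i j + b i j) \<in> C) \<and>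
     (\<forall>k. \<forall>a\<in>C. (\<lambda>i j. k * a i j) \<in> C) \<and>
     (\<forall>a\<in>C. col_shift M N l1 a \<in> C) \<and>
     (\<forall>a\<in>C. row_shift M N l2 a \<in> C)"

definition hamming_weight :: "nat \<Rightarrow> nat \<Rightarrow> (nat \<Rightarrow> nat \<Rightarrow> 'a::zero) \<Rightarrow> nat" where
  "hamming_weight M N a = card {(i, j). i < M \<and> j < N \<and> a i j \<noteq> 0}"

definition min_distance :: "nat \<Rightarrow> nat \<Rightarrow> (nat \<Rightarrow> nat \<Rightarrow> 'a::zero) set \<Rightarrow> nat" where
  "min_distance M N C =
     (LEAST w. \<exists>a\<in>C. a \<noteq> (\<lambda>i j. 0) \<and> hamming_weight M N a = w)"

definition array_eval :: "nat \<Rightarrow> nat \<Rightarrow> (nat \<Rightarrow> nat \<Rightarrow> 'a::comm_ring_1) \<Rightarrow> 'a \<Rightarrow> 'a \<Rightarrow> 'a" where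
  "array_eval M N a x y = (\<Sum>i<M. \<Sum>j<N. a i j * x ^ i * y ^ j)"

definition field_embedding :: "('k::field \<Rightarrow> 'K::field) \<Rightarrow> bool" where
  "field_embedding h \<longleftrightarrow> inj h \<and> h 0 = 0 \<and> h 1 = 1 \<and>
     (\<forall>a b. h (a + b) = h a + h b) \<and> (\<forall>a b. h (a * b) = h a * h b)"

definition primitive_root_of_unity :: "nat \<Rightarrow> 'a::field \<Rightarrow> bool" where
  "primitive_root_of_unity n z \<longleftrightarrow> z ^ n = 1 \<and> (\<forall>k. 0 < k \<and> k < n \<longrightarrow> z ^ k \<noteq> 1)"

definition V_circ :: "('k::field \<Rightarrow> 'K::field) \<Rightarrow> nat \<Rightarrow> nat \<Rightarrow> 'k \<Rightarrow> 'k \<Rightarrow> ('K \<times> 'K) set" where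
  "V_circ h M N l1 l2 = {(a, b). a ^ M = h l1 \<and> b ^ N = h l2}"

definition V_one :: "('k::field \<Rightarrow> 'K::field) \<Rightarrow> nat \<Rightarrow> nat \<Rightarrow> (nat \<Rightarrow> nat \<Rightarrow> 'k) set \<Rightarrow> ('K \<times> 'K) set" where
  "V_one h M N C = {(a, b). \<forall>c\<in>C. array_eval M N (\<lambda>i j. h (c i j)) a b = 0}"

definition common_zero_set ::
  "('k::field \<Rightarrow> 'K::field) \<Rightarrow> nat \<Rightarrow> nat \<Rightarrow> 'k \<Rightarrow> 'k \<Rightarrow> (nat \<Rightarrow> nat \<Rightarrow> 'k) set \<Rightarrow> ('K \<times> 'K) set" where
  "common_zero_set h M N l1 l2 C = V_circ h M N l1 l2 \<inter> V_one h M N C"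

definition spectrum2 :: "('k::field \<Rightarrow> 'K::field) \<Rightarrow> nat \<Rightarrow> nat \<Rightarrow> 'K \<Rightarrow> 'K \<Rightarrow> 'K \<Rightarrow> 'K \<Rightarrow>
     (nat \<Rightarrow> nat \<Rightarrow> 'k) \<Rightarrow> nat \<Rightarrow> nat \<Rightarrow> 'K" where
  "spectrum2 h M N gamma beta z1 z2 c = (\<lambda>\<theta> \<phi>.
     array_eval M N (\<lambda>i j. h (c i j)) (gamma * z1 ^ \<theta>) (beta * z2 ^ \<phi>))"

end

theory Submission
  imports Defs
begin

lemma exists_functional:
  fixes h :: "'k::field \<Rightarrow> 'K::field"
  assumes "field_embedding h"
  shows "\<exists>\<tau>::'K\<Rightarrow>'k. (\<forall>x y. \<tau> (x+y) = \<tau> x + \<tau> y) \<and> (\<forall>a x. \<tau> (h a * x) = a * \<tau> x) \<and> \<tau> 1 = 1"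
proof -
  have hp: "h (a+b) = h a + h b" "h (a*b) = h a * h b" "h 1 = 1" for a b
    using assms unfolding field_embedding_def by auto
  interpret v1: vector_space "\<lambda>a x. h a * x"
    by unfold_locales (auto simp: hp algebra_simps)
  interpret v2: vector_space "(*) :: 'k \<Rightarrow> 'k \<Rightarrow> 'k"
    by unfold_locales (auto simp: algebra_simps)
  interpret vp: vector_space_pair "\<lambda>a x. h a * x" "(*) :: 'k \<Rightarrow> 'k \<Rightarrow> 'k" ..
  have ind: "v1.independent {1::'K}" by simp
  interpret lin: Vector_Spaces.linear "\<lambda>a x. h a * x" "(*) :: 'k \<Rightarrow> 'k \<Rightarrow> 'k" "vp.construct {1} (\<lambda>_. 1)"
    by (rule vp.linear_construct[OF ind])
  show ?thesis
    apply (rule exI[of _ "vp.construct {1} (\<lambda>_. 1)"])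
    using lin.add lin.scale vp.construct_basis[OF ind, of 1 "\<lambda>_. 1"] by auto
qed

lemma prim_nz: assumes "primitive_root_of_unity n (z::'a::field)" "0 < n" shows "z \<noteq> 0"
  using assms unfolding primitive_root_of_unity_def by (metis power_0_left zero_neq_one gr_implies_not0)

lemma orth:
  fixes z :: "'a::field"
  assumes p: "primitive_root_of_unity n z" and a: "a < n" and b: "b < n"
  shows "(\<Sum>t<n. (z^a * inverse z ^ b)^t) = (if a = b then of_nat n else 0)"
proof -
  have n0: "0 < n" using a by auto
  have z0: "z \<noteq> 0" using prim_nz[OF p n0] .
  show ?thesis
  proof (cases "a = b")
    case True
    have "z^a * inverse z ^ b = 1" using True z0 by (metis power_inverse right_inverse power_not_zero)
    then show ?thesis using True by simp
  next
    case False
    let ?w = "z^a * inverse z ^ b"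
    have "?w \<noteq> 1"
    proof
      assume w1: "?w = 1"
      then have eq: "z^a = z^b" using z0 by (simp add: power_inverse field_simps)
      show False
      proof (cases "a < b")
        case True
        have "z^b = z^a * z^(b-a)" using True by (simp add: power_add[symmetric])
        then have "z^(b-a) = 1" using eq z0 by simp
        then show False using p True b unfolding primitive_root_of_unity_def by auto
      next
        case f: False
        then have "b < a" using False by auto
        have "z^a = z^b * z^(a-b)" using \<open>b < a\<close> by (simp add: power_add[symmetric])
        then have "z^(a-b) = 1" using eq z0 by simp
        then show False using p \<open>b < a\<close> a unfolding primitive_root_of_unity_def by auto
      qed
    qed
    moreover have "?w ^ n = 1"
    proof -
      have zn: "z^n = 1" using p unfolding primitive_root_of_unity_def by auto
      have "?w ^ n = (z^n)^a * inverse (z^n) ^ b"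
        by (simp add: power_mult_distrib power_mult[symmetric] power_inverse mult.commute)
      then show ?thesis using zn by simp
    qed
    ultimately show ?thesis using False by (simp add: sum_gp_strict)
  qed
qed

lemma ev_col_shift:
  fixes u :: "nat \<Rightarrow> nat \<Rightarrow> 'a::field"
  assumes "0 < M" "x ^ M = l"
  shows "array_eval M N (col_shift M N l u) x y = x * array_eval M N u x y"
proof -
  obtain m where m: "M = Suc m" using assms(1) by (cases M) auto
  have lx: "x * (x^m * z) = l * z" for z using assms(2) m by (simp add: mult.assoc[symmetric])
  have "array_eval M N (col_shift M N l u) x y =
     (\<Sum>j<N. l * u m j * y^j) + (\<Sum>i<m. \<Sum>j<N. u i j * x^(Suc i) * y^j)"
    unfolding array_eval_def m sum.lessThan_Suc_shift by (simp add: col_shift_def)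
  also have "\<dots> = x * ((\<Sum>i<m. \<Sum>j<N. u i j * x^i * y^j) + (\<Sum>j<N. u m j * x^m * y^j))"
    using assms(2) unfolding m
    by (simp add: sum_distrib_left distrib_left sum.distrib mult_ac lx)
  also have "\<dots> = x * array_eval M N u x y"
    unfolding array_eval_def m by simp
  finally show ?thesis .
qed

lemma ev_row_shift:
  fixes u :: "nat \<Rightarrow> nat \<Rightarrow> 'a::field"
  assumes "0 < N" "y ^ N = l"
  shows "array_eval M N (row_shift M N l u) x y = y * array_eval M N u x y"
proof -
  obtain n where m: "N = Suc n" using assms(1) by (cases N) auto
  have ly: "y * (w * (y^n * z)) = l * (w * z)" for z w using assms(2) m by (simp add: mult_ac)
  have "array_eval M N (row_shift M N l u) x y =
     (\<Sum>i<M. l * u i n * x^i) + (\<Sum>i<M. \<Sum>j<n. u i j * x^i * y^(Suc j))"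
    unfolding array_eval_def m sum.lessThan_Suc_shift by (simp add: row_shift_def sum.distrib mult_ac)
  also have "\<dots> = y * ((\<Sum>i<M. \<Sum>j<n. u i j * x^i * y^j) + (\<Sum>i<M. u i n * x^i * y^n))"
    using assms(2) unfolding m
    by (simp add: sum_distrib_left distrib_left sum.distrib mult_ac ly)
  also have "\<dots> = y * array_eval M N u x y"
    unfolding array_eval_def m by (simp add: sum.distrib)
  finally show ?thesis .
qed

lemma ev_col_pow:
  assumes "0 < M" "x ^ M = l"
  shows "array_eval M N ((col_shift M N l ^^ a) u) x y = x^a * array_eval M N u x y"
  by (induction a) (simp_all add: ev_col_shift[OF assms])

lemma ev_row_pow:
  assumes "0 < N" "y ^ N = l"
  shows "array_eval M N ((row_shift M N l ^^ a) u) x y = y^a * array_eval M N u x y"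
  by (induction a) (simp_all add: ev_row_shift[OF assms])

lemma inversion:
  fixes u :: "nat \<Rightarrow> nat \<Rightarrow> 'a::field"
  assumes p1: "primitive_root_of_unity M z1" and p2: "primitive_root_of_unity N z2"
    and i: "i < M" and j: "j < N"
  shows "(\<Sum>t<M. \<Sum>s<N. array_eval M N u (g * z1^t) (b * z2^s) * (inverse z1 ^ i)^t * (inverse z2 ^ j)^s)
     = of_nat M * of_nat N * g^i * b^j * u i j"
proof -
  have pt: "u a c * (g * z1^t)^a * (b * z2^s)^c * (inverse z1 ^ i)^t * (inverse z2 ^ j)^s
      = u a c * g^a * b^c * ((z1^a * inverse z1^i)^t * (z2^c * inverse z2^j)^s)" for a c t s
  proof -
    have e1: "(z1^t)^a = (z1^a)^t" by (simp add: power_mult[symmetric] mult.commute)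
    have e2: "(z2^s)^c = (z2^c)^s" by (simp add: power_mult[symmetric] mult.commute)
    show ?thesis by (simp only: power_mult_distrib e1 e2) (simp only: mult_ac)
  qed
  have "(\<Sum>t<M. \<Sum>s<N. array_eval M N u (g * z1^t) (b * z2^s) * (inverse z1 ^ i)^t * (inverse z2 ^ j)^s)
     = (\<Sum>t<M. \<Sum>s<N. \<Sum>a<M. \<Sum>c<N. u a c * g^a * b^c * ((z1^a * inverse z1^i)^t * (z2^c * inverse z2^j)^s))"
    unfolding array_eval_def sum_distrib_right pt by (rule refl)
  also have "\<dots> = (\<Sum>a<M. \<Sum>c<N. \<Sum>t<M. \<Sum>s<N. u a c * g^a * b^c * ((z1^a * inverse z1^i)^t * (z2^c * inverse z2^j)^s))"
  proof -
    have "(\<Sum>t<M. \<Sum>s<N. \<Sum>a<M. \<Sum>c<N. F a c t s) = (\<Sum>a<M. \<Sum>c<N. \<Sum>t<M. \<Sum>s<N. F a c t s)" for F :: "nat \<Rightarrow> nat \<Rightarrow> nat \<Rightarrow> nat \<Rightarrow> 'a"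
    proof -
      have "(\<Sum>t<M. \<Sum>s<N. \<Sum>a<M. \<Sum>c<N. F a c t s) = (\<Sum>t<M. \<Sum>a<M. \<Sum>s<N. \<Sum>c<N. F a c t s)"
        by (rule sum.cong[OF refl], rule sum.swap)
      also have "\<dots> = (\<Sum>t<M. \<Sum>a<M. \<Sum>c<N. \<Sum>s<N. F a c t s)"
        by (rule sum.cong[OF refl], rule sum.cong[OF refl], rule sum.swap)
      also have "\<dots> = (\<Sum>a<M. \<Sum>t<M. \<Sum>c<N. \<Sum>s<N. F a c t s)"
        by (rule sum.swap)
      also have "\<dots> = (\<Sum>a<M. \<Sum>c<N. \<Sum>t<M. \<Sum>s<N. F a c t s)"
        by (rule sum.cong[OF refl], rule sum.swap)
      finally show ?thesis .
    qed
    then show ?thesis .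
  qed
  also have "\<dots> = (\<Sum>a<M. \<Sum>c<N. u a c * g^a * b^c * ((\<Sum>t<M. (z1^a * inverse z1^i)^t) * (\<Sum>s<N. (z2^c * inverse z2^j)^s)))"
  proof -
    have "(\<Sum>t<M. \<Sum>s<N. K*(X^t*Y^s)) = K*((\<Sum>t<M. X^t)*(\<Sum>s<N. Y^s))" for K X Y :: 'a
      unfolding sum_product by (simp only: sum_distrib_left)
    then show ?thesis by simp
  qed
  also have "\<dots> = (\<Sum>a<M. \<Sum>c<N. if a = i then (if c = j then u i j * g^i * b^j * (of_nat M * of_nat N) else 0) else 0)"
    by (intro sum.cong refl) (simp add: orth[OF p1 _ i] orth[OF p2 _ j])
  also have "\<dots> = (\<Sum>a<M. if a = i then (\<Sum>c<N. if c = j then u i j * g^i * b^j * (of_nat M * of_nat N) else 0) else 0)"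
    by (intro sum.cong refl) auto
  also have "\<dots> = of_nat M * of_nat N * g^i * b^j * u i j"
    using i j by (simp add: sum.delta' mult_ac)
  finally show ?thesis .
qed

definition restr :: "nat \<Rightarrow> nat \<Rightarrow> ('K \<Rightarrow> 'k::zero) \<Rightarrow> (nat \<Rightarrow> nat \<Rightarrow> 'K) \<Rightarrow> (nat \<Rightarrow> nat \<Rightarrow> 'k)" where
  "restr M N \<tau> u = (\<lambda>i j. if i < M \<and> j < N then \<tau> (u i j) else 0)"

definition klin :: "('k::field \<Rightarrow> 'K::field) \<Rightarrow> ('K \<Rightarrow> 'k) \<Rightarrow> bool" where
  "klin h \<tau> \<longleftrightarrow> (\<forall>x y. \<tau> (x+y) = \<tau> x + \<tau> y) \<and> (\<forall>a x. \<tau> (h a * x) = a * \<tau> x)"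

definition good :: "('k::field \<Rightarrow> 'K::field) \<Rightarrow> nat \<Rightarrow> nat \<Rightarrow> (nat \<Rightarrow> nat \<Rightarrow> 'k) set \<Rightarrow> (nat \<Rightarrow> nat \<Rightarrow> 'K) \<Rightarrow> bool" where
  "good h M N C u \<longleftrightarrow> (\<forall>\<tau>. klin h \<tau> \<longrightarrow> restr M N \<tau> u \<in> C)"

lemma klin_0: "klin h \<tau> \<Longrightarrow> \<tau> 0 = 0"
  unfolding klin_def by (metis add_cancel_right_right add_0)

lemma good_zero:
  assumes "constacyclic_code_2D M N l1 l2 C"
  shows "good h M N C (\<lambda>i j. 0)"
  using assms unfolding good_def restr_def constacyclic_code_2D_def
  by (auto simp: klin_0 cong: if_cong)

lemma good_add:
  assumes "constacyclic_code_2D M N l1 l2 C" "good h M N C u" "good h M N C v"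
  shows "good h M N C (\<lambda>i j. u i j + v i j)"
  unfolding good_def
proof (intro allI impI)
  fix \<tau> assume k: "klin h \<tau>"
  have "restr M N \<tau> (\<lambda>i j. u i j + v i j) = (\<lambda>i j. restr M N \<tau> u i j + restr M N \<tau> v i j)"
    using k unfolding restr_def klin_def by (auto simp: fun_eq_iff)
  then show "restr M N \<tau> (\<lambda>i j. u i j + v i j) \<in> C"
    using assms k unfolding good_def constacyclic_code_2D_def by auto
qed

lemma good_scale:
  assumes "good h M N C u"
  shows "good h M N C (\<lambda>i j. z * u i j)"
  unfolding good_def
proof (intro allI impI)
  fix \<tau> assume k: "klin h \<tau>"
  have k2: "klin h (\<lambda>x. \<tau> (z * x))" using k unfolding klin_def by (simp add: distrib_left) (metis mult.left_commute)
  have "restr M N \<tau> (\<lambda>i j. z * u i j) = restr M N (\<lambda>x. \<tau> (z * x)) u"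
    unfolding restr_def by auto
  then show "restr M N \<tau> (\<lambda>i j. z * u i j) \<in> C" using assms k2 unfolding good_def by auto
qed

lemma good_sum:
  assumes "constacyclic_code_2D M N l1 l2 C" "finite F" "\<And>k. k \<in> F \<Longrightarrow> good h M N C (f k)"
  shows "good h M N C (\<lambda>i j. \<Sum>k\<in>F. f k i j)"
  using assms(2,3)
proof (induction F rule: finite_induct)
  case empty then show ?case using good_zero[OF assms(1)] by simp
next
  case (insert x F)
  then show ?case using good_add[OF assms(1), of h "f x" "\<lambda>i j. \<Sum>k\<in>F. f k i j"] by simp
qed

lemma good_col:
  assumes code: "constacyclic_code_2D M N l1 l2 C" and h: "field_embedding h" and g: "good h M N C u"
  shows "good h M N C (col_shift M N (h l1) u)"
  unfolding good_def
proof (intro allI impI)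
  fix \<tau> assume k: "klin h \<tau>"
  have "restr M N \<tau> (col_shift M N (h l1) u) = col_shift M N l1 (restr M N \<tau> u)"
    using k unfolding restr_def klin_def col_shift_def by (auto simp: fun_eq_iff)
  then show "restr M N \<tau> (col_shift M N (h l1) u) \<in> C"
    using code g k unfolding good_def constacyclic_code_2D_def by auto
qed

lemma good_row:
  assumes code: "constacyclic_code_2D M N l1 l2 C" and h: "field_embedding h" and g: "good h M N C u"
  shows "good h M N C (row_shift M N (h l2) u)"
  unfolding good_def
proof (intro allI impI)
  fix \<tau> assume k: "klin h \<tau>"
  have "restr M N \<tau> (row_shift M N (h l2) u) = row_shift M N l2 (restr M N \<tau> u)"
    using k unfolding restr_def klin_def row_shift_def by (auto simp: fun_eq_iff)
  then show "restr M N \<tau> (row_shift M N (h l2) u) \<in> C"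
    using code g k unfolding good_def constacyclic_code_2D_def by auto
qed

lemma good_col_pow:
  assumes code: "constacyclic_code_2D M N l1 l2 C" and h: "field_embedding h" and g: "good h M N C u"
  shows "good h M N C ((col_shift M N (h l1) ^^ a) u)"
  by (induction a) (simp_all add: g good_col[OF code h])

lemma good_row_pow:
  assumes code: "constacyclic_code_2D M N l1 l2 C" and h: "field_embedding h" and g: "good h M N C u"
  shows "good h M N C ((row_shift M N (h l2) ^^ a) u)"
  by (induction a) (simp_all add: g good_row[OF code h])

lemma good_h:
  assumes code: "constacyclic_code_2D M N l1 l2 C" and c: "c \<in> C"
  shows "good h M N C (\<lambda>i j. h (c i j))"
  unfolding good_def
proof (intro allI impI)
  fix \<tau> assume k: "klin h \<tau>"
  have ca: "c \<in> arrays M N" using code c unfolding constacyclic_code_2D_def by auto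
  have "restr M N \<tau> (\<lambda>i j. h (c i j)) = (\<lambda>i j. \<tau> 1 * c i j)"
  proof (intro ext)
    fix i j
    show "restr M N \<tau> (\<lambda>i j. h (c i j)) i j = \<tau> 1 * c i j"
    proof (cases "i < M \<and> j < N")
      case True
      have "\<tau> (h (c i j)) = \<tau> (h (c i j) * 1)" by simp
      also have "\<dots> = c i j * \<tau> 1" using k unfolding klin_def by blast
      finally show ?thesis using True unfolding restr_def by (simp add: mult.commute)
    next
      case False
      then show ?thesis using ca unfolding restr_def arrays_def by auto
    qed
  qed
  then show "restr M N \<tau> (\<lambda>i j. h (c i j)) \<in> C"
    using code c unfolding constacyclic_code_2D_def by auto
qed

lemma ev_zero: "array_eval M N (\<lambda>i j. 0) x y = 0"
  unfolding array_eval_def by simp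

lemma ev_add: "array_eval M N (\<lambda>i j. u i j + v i j) x y = array_eval M N u x y + array_eval M N v x y"
  unfolding array_eval_def by (simp add: sum.distrib algebra_simps)

lemma ev_scale: "array_eval M N (\<lambda>i j. z * u i j) x y = z * array_eval M N u x y"
  unfolding array_eval_def by (simp add: sum_distrib_left algebra_simps)

lemma ev_sum:
  assumes "finite F"
  shows "array_eval M N (\<lambda>i j. \<Sum>k\<in>F. f k i j) x y = (\<Sum>k\<in>F. array_eval M N (f k) x y)"
  using assms
proof (induction F rule: finite_induct)
  case empty then show ?case using ev_zero by simp
next
  case (insert a F)
  then show ?case using ev_add[of M N "f a" "\<lambda>i j. \<Sum>k\<in>F. f k i j" x y] by simp
qed

lemma ev_comb:
  fixes u w :: "nat \<Rightarrow> nat \<Rightarrow> 'a::field"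
  assumes "0 < M" "0 < N" "x ^ M = L1" "y ^ N = L2"
  shows "array_eval M N (\<lambda>i j. \<Sum>a<M. \<Sum>b<N. w a b * ((col_shift M N L1 ^^ a) ((row_shift M N L2 ^^ b) u)) i j) x y
     = array_eval M N w x y * array_eval M N u x y"
proof -
  have "array_eval M N (\<lambda>i j. \<Sum>a<M. \<Sum>b<N. w a b * ((col_shift M N L1 ^^ a) ((row_shift M N L2 ^^ b) u)) i j) x y
     = (\<Sum>a<M. \<Sum>b<N. array_eval M N (\<lambda>i j. w a b * ((col_shift M N L1 ^^ a) ((row_shift M N L2 ^^ b) u)) i j) x y)"
    by (simp add: ev_sum)
  also have "\<dots> = (\<Sum>a<M. \<Sum>b<N. w a b * x^a * y^b * array_eval M N u x y)"
    by (simp add: ev_scale ev_col_pow[OF assms(1,3)] ev_row_pow[OF assms(2,4)] mult_ac)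
  also have "\<dots> = array_eval M N w x y * array_eval M N u x y"
    unfolding array_eval_def by (simp add: sum_distrib_right)
  finally show ?thesis .
qed

theorem mainTheorem10:
  fixes h :: "'k::{field,finite} \<Rightarrow> 'K::{field,finite}"
    and M N :: nat and l1 l2 :: 'k and \<gamma> \<beta> \<zeta>1 \<zeta>2 :: 'K
    and C :: "(nat \<Rightarrow> nat \<Rightarrow> 'k) set" and d :: nat
    and c e :: "nat \<Rightarrow> nat \<Rightarrow> 'k"
    and spec_nonnull :: "(nat \<times> nat) list" and err_free :: "(nat \<times> nat) list"
  assumes hemb: "field_embedding h"
    and MN: "0 < M" "0 < N"
    and cop: "coprime M CHAR('k)" "coprime N CHAR('k)"
    and lam: "l1 \<noteq> 0" "l2 \<noteq> 0"
    and gam: "\<gamma> ^ M = h l1" and bet: "\<beta> ^ N = h l2"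
    and z1: "primitive_root_of_unity M \<zeta>1" and z2: "primitive_root_of_unity N \<zeta>2"
    and code: "constacyclic_code_2D M N l1 l2 C"
    and dist: "d = min_distance M N C"
    and cC: "c \<in> C"
    and earr: "e \<in> arrays M N"
    and tpos: "1 \<le> card {(i, j). i < M \<and> j < N \<and> e i j \<noteq> 0}"
    and tbound: "card {(i, j). i < M \<and> j < N \<and> e i j \<noteq> 0} \<le> (d - 1) div 2"
    and enum_spec: "distinct spec_nonnull"
      "set spec_nonnull = Omega M N -
         {(\<theta>, \<phi>). \<theta> < M \<and> \<phi> < N \<and>
            (\<gamma> * \<zeta>1 ^ \<theta>, \<beta> * \<zeta>2 ^ \<phi>) \<in> common_zero_set h M N l1 l2 C}"
    and enum_err: "distinct err_free"
      "set err_free = Omega M N - {(i, j). i < M \<and> j < N \<and> e i j \<noteq> 0}"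
  shows
    "let r = (\<lambda>i j. c i j + e i j);
         Rs = spectrum2 h M N \<gamma> \<beta> \<zeta>1 \<zeta>2 r;
         Rpoly = (\<lambda>x y. array_eval M N Rs x y);
         s' = length spec_nonnull; t' = length err_free;
         A = mat t' s' (\<lambda>(l, k).
               inverse (\<zeta>1 ^ (fst (err_free ! l) * fst (spec_nonnull ! k))) *
               inverse (\<zeta>2 ^ (snd (err_free ! l) * snd (spec_nonnull ! k))));
         B = vec t' (\<lambda>l. Rpoly (inverse \<zeta>1 ^ fst (err_free ! l))
                               (inverse \<zeta>2 ^ snd (err_free ! l)));
         Cs = spectrum2 h M N \<gamma> \<beta> \<zeta>1 \<zeta>2 c
     in (\<exists>!X. X \<in> carrier_vec s' \<and> A *\<^sub>v X = B) \<and>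
        A *\<^sub>v vec s' (\<lambda>k. Cs (fst (spec_nonnull ! k)) (snd (spec_nonnull ! k))) = B"
proof -
  have hinj: "inj h" and h0: "h 0 = 0" and h1: "h 1 = 1"
    and hadd: "\<And>a b. h (a + b) = h a + h b" and hmul: "\<And>a b. h (a * b) = h a * h b"
    using hemb unfolding field_embedding_def by auto
  have hof: "h (of_nat n) = of_nat n" for n
    by (induction n) (simp_all add: h0 h1 hadd)
  have ofnz: "(of_nat n :: 'K) \<noteq> 0" if cn: "coprime n CHAR('k)" for n
  proof
    assume "(of_nat n :: 'K) = 0"
    then have "h (of_nat n) = h 0" using hof h0 by simp
    then have "(of_nat n :: 'k) = 0" using hinj by (simp add: inj_eq)
    then have "CHAR('k) dvd n" by (simp add: of_nat_eq_0_iff_char_dvd)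
    then have "is_unit CHAR('k)" using cn by (meson coprime_common_divisor dvd_refl)
    then have "CHAR('k) = 1" by simp
    then show False using of_nat_CHAR[where ?'a='k] by simp
  qed
  have MNnz: "(of_nat M :: 'K) \<noteq> 0" "(of_nat N :: 'K) \<noteq> 0" using ofnz cop by auto
  have z1nz: "\<zeta>1 \<noteq> 0" using prim_nz[OF z1 MN(1)] .
  have z2nz: "\<zeta>2 \<noteq> 0" using prim_nz[OF z2 MN(2)] .
  have z1M: "\<zeta>1 ^ M = 1" using z1 unfolding primitive_root_of_unity_def by auto
  have z2N: "\<zeta>2 ^ N = 1" using z2 unfolding primitive_root_of_unity_def by auto
  have hl1: "h l1 \<noteq> 0" using lam(1) hinj h0 by (metis injD)
  have hl2: "h l2 \<noteq> 0" using lam(2) hinj h0 by (metis injD)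
  have gnz: "\<gamma> \<noteq> 0" using gam hl1 MN(1) by (auto simp: zero_power)
  have bnz: "\<beta> \<noteq> 0" using bet hl2 MN(2) by (auto simp: zero_power)
  have ptM: "(\<gamma> * \<zeta>1 ^ t) ^ M = h l1" for t
    by (simp add: power_mult_distrib gam power_mult[symmetric] mult.commute[of t M]) (simp add: power_mult z1M)
  have ptN: "(\<beta> * \<zeta>2 ^ t) ^ N = h l2" for t
    by (simp add: power_mult_distrib bet power_mult[symmetric] mult.commute[of t N]) (simp add: power_mult z2N)
  have codeC: "c' \<in> C \<Longrightarrow> c' \<in> arrays M N" for c' using code unfolding constacyclic_code_2D_def by auto
  have finE: "finite {(i, j). i < M \<and> j < N \<and> e i j \<noteq> 0}"
    by (rule finite_subset[of _ "{..<M} \<times> {..<N}"]) auto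
  have nullC: "array_eval M N (\<lambda>i j. h (c' i j)) (\<gamma> * \<zeta>1 ^ t) (\<beta> * \<zeta>2 ^ s) = 0"
    if "t < M" "s < N" "(t, s) \<notin> set spec_nonnull" "c' \<in> C" for t s c'
  proof -
    have "(\<gamma> * \<zeta>1 ^ t, \<beta> * \<zeta>2 ^ s) \<in> common_zero_set h M N l1 l2 C"
      using that enum_spec(2) unfolding Omega_def by auto
    then show ?thesis using that(4) unfolding common_zero_set_def V_one_def by auto
  qed
  have specP: "fst (spec_nonnull ! k) < M \<and> snd (spec_nonnull ! k) < N \<and>
      (\<gamma> * \<zeta>1 ^ fst (spec_nonnull ! k), \<beta> * \<zeta>2 ^ snd (spec_nonnull ! k)) \<notin> common_zero_set h M N l1 l2 C"
    if "k < length spec_nonnull" for k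
  proof -
    obtain t s where ts: "spec_nonnull ! k = (t, s)" by fastforce
    have "(t, s) \<in> set spec_nonnull" using nth_mem[OF that] unfolding ts .
    then have "(t, s) \<in> Omega M N - {(\<theta>, \<phi>). \<theta> < M \<and> \<phi> < N \<and>
            (\<gamma> * \<zeta>1 ^ \<theta>, \<beta> * \<zeta>2 ^ \<phi>) \<in> common_zero_set h M N l1 l2 C}"
      by (simp only: enum_spec(2))
    then show ?thesis unfolding ts Omega_def by simp
  qed
  have errP: "fst (err_free ! l) < M \<and> snd (err_free ! l) < N \<and> e (fst (err_free ! l)) (snd (err_free ! l)) = 0"
    if "l < length err_free" for l
  proof -
    obtain t s where ts: "err_free ! l = (t, s)" by fastforce
    have "(t, s) \<in> set err_free" using nth_mem[OF that] unfolding ts .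
    then have "(t, s) \<in> Omega M N - {(i, j). i < M \<and> j < N \<and> e i j \<noteq> 0}"
      by (simp only: enum_err(2))
    then show ?thesis unfolding ts Omega_def by simp
  qed
  have null_sum: "(\<Sum>k<length spec_nonnull. F (spec_nonnull ! k)) = (\<Sum>t<M. \<Sum>s<N. F (t, s))"
    if F0: "\<And>t s. t < M \<Longrightarrow> s < N \<Longrightarrow> (t, s) \<notin> set spec_nonnull \<Longrightarrow> F (t, s) = 0" for F :: "nat \<times> nat \<Rightarrow> 'K"
  proof -
    have "(\<Sum>k<length spec_nonnull. F (spec_nonnull ! k)) = (\<Sum>x\<in>set spec_nonnull. F x)"
      by (rule sum.reindex_bij_betw[OF bij_betw_nth[OF enum_spec(1) refl refl]])
    also have "\<dots> = (\<Sum>x\<in>{..<M} \<times> {..<N}. F x)"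
    proof (rule sum.mono_neutral_left)
      show "set spec_nonnull \<subseteq> {..<M} \<times> {..<N}" using enum_spec(2) unfolding Omega_def by auto
      show "\<forall>x\<in>{..<M} \<times> {..<N} - set spec_nonnull. F x = 0" using F0 by auto
    qed auto
    also have "\<dots> = (\<Sum>t<M. \<Sum>s<N. F (t, s))"
      by (simp add: sum.cartesian_product)
    finally show ?thesis .
  qed
  have invpow: "inverse (z ^ (a * b)) = (inverse z ^ a) ^ b" for z :: 'K and a b
    by (simp add: power_inverse power_mult)
  define s' where "s' = length spec_nonnull"
  define t' where "t' = length err_free"
  define A where "A = mat t' s' (\<lambda>(l, k).
               inverse (\<zeta>1 ^ (fst (err_free ! l) * fst (spec_nonnull ! k))) *
               inverse (\<zeta>2 ^ (snd (err_free ! l) * snd (spec_nonnull ! k))))"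
  define Rs where "Rs = spectrum2 h M N \<gamma> \<beta> \<zeta>1 \<zeta>2 (\<lambda>i j. c i j + e i j)"
  define B where "B = vec t' (\<lambda>l. array_eval M N Rs (inverse \<zeta>1 ^ fst (err_free ! l))
                               (inverse \<zeta>2 ^ snd (err_free ! l)))"
  define Cs where "Cs = spectrum2 h M N \<gamma> \<beta> \<zeta>1 \<zeta>2 c"
  define Cv where "Cv = vec s' (\<lambda>k. Cs (fst (spec_nonnull ! k)) (snd (spec_nonnull ! k)))"
  have Aent: "A $$ (l, k) = (inverse \<zeta>1 ^ fst (err_free ! l)) ^ fst (spec_nonnull ! k) *
       (inverse \<zeta>2 ^ snd (err_free ! l)) ^ snd (spec_nonnull ! k)" if "l < t'" "k < s'" for l k
    using that unfolding A_def by (simp add: invpow)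
  have Amul: "(A *\<^sub>v v) $ l = (\<Sum>k<s'. A $$ (l, k) * v $ k)" if "l < t'" "v \<in> carrier_vec s'" for v l
    using that unfolding A_def by (simp add: scalar_prod_def atLeast0LessThan)
  have dimA: "A \<in> carrier_mat t' s'" unfolding A_def by simp
  have main2: "A *\<^sub>v Cv = B"
  proof (rule eq_vecI)
    show "dim_vec (A *\<^sub>v Cv) = dim_vec B" unfolding A_def B_def by simp
    fix l assume "l < dim_vec B"
    then have l: "l < t'" unfolding B_def by simp
    define i where "i = fst (err_free ! l)"
    define j where "j = snd (err_free ! l)"
    have ij: "i < M" "j < N" "e i j = 0" using errP[of l] l unfolding i_def j_def t'_def by auto
    have "(A *\<^sub>v Cv) $ l = (\<Sum>k<s'. Cs (fst (spec_nonnull ! k)) (snd (spec_nonnull ! k)) *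
          (inverse \<zeta>1 ^ i) ^ fst (spec_nonnull ! k) * (inverse \<zeta>2 ^ j) ^ snd (spec_nonnull ! k))"
      using l by (simp add: Amul Cv_def Aent i_def j_def mult_ac)
    also have "\<dots> = (\<Sum>t<M. \<Sum>s<N. Cs t s * (inverse \<zeta>1 ^ i) ^ t * (inverse \<zeta>2 ^ j) ^ s)"
      unfolding s'_def
      using null_sum[of "\<lambda>p. Cs (fst p) (snd p) * (inverse \<zeta>1 ^ i) ^ fst p * (inverse \<zeta>2 ^ j) ^ snd p"]
      by (simp add: Cs_def spectrum2_def nullC[OF _ _ _ cC])
    also have "\<dots> = of_nat M * of_nat N * \<gamma>^i * \<beta>^j * h (c i j)"
      unfolding Cs_def spectrum2_def by (rule inversion[OF z1 z2 ij(1,2)])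
    also have "\<dots> = B $ l"
    proof -
      have "B $ l = (\<Sum>t<M. \<Sum>s<N. Rs t s * (inverse \<zeta>1 ^ i) ^ t * (inverse \<zeta>2 ^ j) ^ s)"
        using l unfolding B_def array_eval_def i_def j_def by simp
      also have "\<dots> = of_nat M * of_nat N * \<gamma>^i * \<beta>^j * h (c i j + e i j)"
        unfolding Rs_def spectrum2_def by (rule inversion[OF z1 z2 ij(1,2)])
      finally show ?thesis using ij(3) by simp
    qed
    finally show "(A *\<^sub>v Cv) $ l = B $ l" .
  qed
  have kernel: "\<forall>k<s'. Zf k = 0" if hz: "\<forall>l<t'. (\<Sum>k<s'. A $$ (l, k) * Zf k) = 0" for Zf
  proof (rule ccontr)
    assume "\<not> (\<forall>k<s'. Zf k = 0)"
    then obtain k0 where k0: "k0 < s'" "Zf k0 \<noteq> 0" by auto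
    define th where "th k = fst (spec_nonnull ! k)" for k
    define ph where "ph k = snd (spec_nonnull ! k)" for k
    have thph: "th k < M" "ph k < N" if "k < s'" for k
      using specP[of k] that unfolding th_def ph_def s'_def by auto
    have "\<forall>k. \<exists>c'. k < s' \<longrightarrow> c' \<in> C \<and>
        array_eval M N (\<lambda>i j. h (c' i j)) (\<gamma> * \<zeta>1 ^ th k) (\<beta> * \<zeta>2 ^ ph k) \<noteq> 0"
    proof
      fix k
      show "\<exists>c'. k < s' \<longrightarrow> c' \<in> C \<and>
        array_eval M N (\<lambda>i j. h (c' i j)) (\<gamma> * \<zeta>1 ^ th k) (\<beta> * \<zeta>2 ^ ph k) \<noteq> 0"
      proof (cases "k < s'")
        case True
        have nz: "(\<gamma> * \<zeta>1 ^ th k, \<beta> * \<zeta>2 ^ ph k) \<notin> common_zero_set h M N l1 l2 C"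
          using specP[of k] True unfolding th_def ph_def s'_def by auto
        have "(\<gamma> * \<zeta>1 ^ th k, \<beta> * \<zeta>2 ^ ph k) \<in> V_circ h M N l1 l2"
          unfolding V_circ_def using ptM ptN by auto
        then have "(\<gamma> * \<zeta>1 ^ th k, \<beta> * \<zeta>2 ^ ph k) \<notin> V_one h M N C"
          using nz unfolding common_zero_set_def by auto
        then show ?thesis unfolding V_one_def by auto
      qed auto
    qed
    then obtain cf where cf: "\<And>k. k < s' \<Longrightarrow> cf k \<in> C \<and>
        array_eval M N (\<lambda>i j. h (cf k i j)) (\<gamma> * \<zeta>1 ^ th k) (\<beta> * \<zeta>2 ^ ph k) \<noteq> 0"
      using choice[of "\<lambda>k c'. k < s' \<longrightarrow> c' \<in> C \<and>
        array_eval M N (\<lambda>i j. h (c' i j)) (\<gamma> * \<zeta>1 ^ th k) (\<beta> * \<zeta>2 ^ ph k) \<noteq> 0"] by blast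
    define D where "D k = array_eval M N (\<lambda>i j. h (cf k i j)) (\<gamma> * \<zeta>1 ^ th k) (\<beta> * \<zeta>2 ^ ph k)" for k
    define K where "K k = Zf k / D k / (of_nat M * of_nat N)" for k
    define wk where "wk k a b = K k * (inverse \<gamma> ^ a * inverse \<beta> ^ b * (inverse \<zeta>1 ^ th k) ^ a * (inverse \<zeta>2 ^ ph k) ^ b)" for k a b
    have ev_wk: "array_eval M N (wk k) (\<gamma> * \<zeta>1 ^ t) (\<beta> * \<zeta>2 ^ s) = (if t = th k \<and> s = ph k then Zf k / D k else 0)"
      if k: "k < s'" and ts: "t < M" "s < N" for k t s
    proof -
      have pt: "wk k a b * (\<gamma> * \<zeta>1 ^ t) ^ a * (\<beta> * \<zeta>2 ^ s) ^ b
          = K k * ((\<zeta>1 ^ t * inverse \<zeta>1 ^ th k) ^ a * (\<zeta>2 ^ s * inverse \<zeta>2 ^ ph k) ^ b)" for a b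
      proof -
        have g1: "inverse \<gamma> ^ a * \<gamma> ^ a = 1" using gnz by (simp add: power_inverse)
        have b1: "inverse \<beta> ^ b * \<beta> ^ b = 1" using bnz by (simp add: power_inverse)
        show ?thesis unfolding wk_def power_mult_distrib
          using g1 b1 by (simp add: mult_ac) (metis (no_types, lifting) mult.assoc mult.left_commute mult_1_right)
      qed
      have "array_eval M N (wk k) (\<gamma> * \<zeta>1 ^ t) (\<beta> * \<zeta>2 ^ s)
          = (\<Sum>a<M. \<Sum>b<N. K k * ((\<zeta>1 ^ t * inverse \<zeta>1 ^ th k) ^ a * (\<zeta>2 ^ s * inverse \<zeta>2 ^ ph k) ^ b))"
        unfolding array_eval_def pt by (rule refl)
      also have "\<dots> = K k * ((\<Sum>a<M. (\<zeta>1 ^ t * inverse \<zeta>1 ^ th k) ^ a) * (\<Sum>b<N. (\<zeta>2 ^ s * inverse \<zeta>2 ^ ph k) ^ b))"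
        unfolding sum_product by (simp only: sum_distrib_left)
      also have "\<dots> = K k * ((if t = th k then of_nat M else 0) * (if s = ph k then of_nat N else 0))"
        by (simp only: orth[OF z1 ts(1) thph(1)[OF k]] orth[OF z2 ts(2) thph(2)[OF k]])
      also have "\<dots> = (if t = th k \<and> s = ph k then Zf k / D k else 0)"
        unfolding K_def using MNnz by auto
      finally show ?thesis .
    qed
    define X1 where "X1 = col_shift M N (h l1)"
    define Y1 where "Y1 = row_shift M N (h l2)"
    define uk where "uk k = (\<lambda>i j. \<Sum>a<M. \<Sum>b<N. wk k a b * ((X1 ^^ a) ((Y1 ^^ b) (\<lambda>i j. h (cf k i j)))) i j)" for k
    have ev_uk: "array_eval M N (uk k) (\<gamma> * \<zeta>1 ^ t) (\<beta> * \<zeta>2 ^ s) = (if t = th k \<and> s = ph k then Zf k else 0)"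
      if k: "k < s'" and ts: "t < M" "s < N" for k t s
    proof -
      have "array_eval M N (uk k) (\<gamma> * \<zeta>1 ^ t) (\<beta> * \<zeta>2 ^ s)
         = array_eval M N (wk k) (\<gamma> * \<zeta>1 ^ t) (\<beta> * \<zeta>2 ^ s) * array_eval M N (\<lambda>i j. h (cf k i j)) (\<gamma> * \<zeta>1 ^ t) (\<beta> * \<zeta>2 ^ s)"
        unfolding uk_def X1_def Y1_def by (rule ev_comb[OF MN ptM ptN])
      also have "\<dots> = (if t = th k \<and> s = ph k then Zf k else 0)"
        using ev_wk[OF k ts] cf[OF k] unfolding D_def by auto
      finally show ?thesis .
    qed
    have good_uk: "good h M N C (uk k)" if k: "k < s'" for k
      unfolding uk_def
      by (intro good_sum[OF code] finite_lessThan good_scale,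
          unfold X1_def Y1_def, intro good_col_pow[OF code hemb] good_row_pow[OF code hemb] good_h[OF code])
         (use cf[OF k] in auto)
    define u where "u = (\<lambda>i j. \<Sum>k<s'. uk k i j)"
    have good_u: "good h M N C u" unfolding u_def
      by (rule good_sum[OF code finite_lessThan]) (simp add: good_uk)
    have ev_u: "array_eval M N u (\<gamma> * \<zeta>1 ^ t) (\<beta> * \<zeta>2 ^ s) = (\<Sum>k<s'. if (t, s) = spec_nonnull ! k then Zf k else 0)"
      if ts: "t < M" "s < N" for t s
      unfolding u_def ev_sum[OF finite_lessThan]
      by (intro sum.cong refl) (simp add: ev_uk ts th_def ph_def prod_eq_iff)
    have ev_u_nth: "array_eval M N u (\<gamma> * \<zeta>1 ^ th k') (\<beta> * \<zeta>2 ^ ph k') = Zf k'" if k': "k' < s'" for k'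
    proof -
      have "array_eval M N u (\<gamma> * \<zeta>1 ^ th k') (\<beta> * \<zeta>2 ^ ph k') = (\<Sum>k<s'. if k' = k then Zf k else 0)"
        unfolding ev_u[OF thph[OF k']]
      proof (intro sum.cong refl)
        fix k assume "k \<in> {..<s'}"
        then have "(th k', ph k') = spec_nonnull ! k \<longleftrightarrow> k' = k"
          using nth_eq_iff_index_eq[OF enum_spec(1)] k' unfolding th_def ph_def s'_def by auto
        then show "(if (th k', ph k') = spec_nonnull ! k then Zf k else 0) = (if k' = k then Zf k else 0)" by simp
      qed
      also have "\<dots> = Zf k'" using k' by simp
      finally show ?thesis .
    qed
    have ev_u_null: "array_eval M N u (\<gamma> * \<zeta>1 ^ t) (\<beta> * \<zeta>2 ^ s) = 0"
      if ts: "t < M" "s < N" "(t, s) \<notin> set spec_nonnull" for t s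
      unfolding ev_u[OF ts(1,2)] using ts(3) nth_mem unfolding s'_def by (intro sum.neutral) fastforce
    have u0: "u i j = 0" if ij: "(i, j) \<in> set err_free" for i j
    proof -
      obtain l where l: "l < t'" "err_free ! l = (i, j)" using ij unfolding in_set_conv_nth t'_def by auto
      have ijb: "i < M" "j < N" using errP[of l] l unfolding t'_def by auto
      let ?X = "inverse \<zeta>1 ^ i" and ?Y = "inverse \<zeta>2 ^ j"
      have "of_nat M * of_nat N * \<gamma>^i * \<beta>^j * u i j =
          (\<Sum>t<M. \<Sum>s<N. array_eval M N u (\<gamma> * \<zeta>1^t) (\<beta> * \<zeta>2^s) * ?X^t * ?Y^s)"
        by (rule inversion[OF z1 z2 ijb, symmetric])
      also have "\<dots> = (\<Sum>k<s'. array_eval M N u (\<gamma> * \<zeta>1^th k) (\<beta> * \<zeta>2^ph k) * ?X^th k * ?Y^ph k)"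
        unfolding s'_def th_def ph_def
        using null_sum[of "\<lambda>p. array_eval M N u (\<gamma> * \<zeta>1^fst p) (\<beta> * \<zeta>2^snd p) * ?X^fst p * ?Y^snd p"]
        by (simp add: ev_u_null)
      also have "\<dots> = (\<Sum>k<s'. A $$ (l, k) * Zf k)"
        by (intro sum.cong refl) (simp add: ev_u_nth[unfolded th_def ph_def] Aent[OF l(1)] l(2) th_def ph_def mult_ac)
      also have "\<dots> = 0" using hz l(1) by simp
      finally show ?thesis using MNnz gnz bnz by simp
    qed
    have "\<exists>i j. i < M \<and> j < N \<and> u i j \<noteq> 0"
    proof (rule ccontr)
      assume "\<not> ?thesis"
      then have "array_eval M N u (\<gamma> * \<zeta>1 ^ th k0) (\<beta> * \<zeta>2 ^ ph k0) = 0"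
        unfolding array_eval_def by simp
      then show False using ev_u_nth[OF k0(1)] k0(2) by simp
    qed
    then obtain i0 j0 where ij0: "i0 < M" "j0 < N" "u i0 j0 \<noteq> 0" by blast
    obtain \<tau> :: "'K \<Rightarrow> 'k" where tau: "\<forall>x y. \<tau> (x+y) = \<tau> x + \<tau> y" "\<forall>a x. \<tau> (h a * x) = a * \<tau> x" "\<tau> 1 = 1"
      using exists_functional[OF hemb] by blast
    define \<tau>' where "\<tau>' x = \<tau> (x * inverse (u i0 j0))" for x
    have kl: "klin h \<tau>'" unfolding klin_def \<tau>'_def using tau(1,2)
      by (simp add: distrib_right mult.assoc)
    define w where "w = restr M N \<tau>' u"
    have wC: "w \<in> C" using good_u kl unfolding good_def w_def by blast
    have w0: "w i0 j0 = 1" unfolding w_def restr_def \<tau>'_def using ij0 tau(3) by simp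
    have ene: "e i j \<noteq> 0" if a: "i < M" "j < N" "w i j \<noteq> 0" for i j
    proof
      assume "e i j = 0"
      then have "(i, j) \<in> Omega M N - {(i, j). i < M \<and> j < N \<and> e i j \<noteq> 0}"
        using a unfolding Omega_def by auto
      then have "(i, j) \<in> set err_free" by (simp only: enum_err(2))
      then have "u i j = 0" by (rule u0)
      then have "w i j = 0" unfolding w_def restr_def \<tau>'_def using klin_0[of h \<tau>] tau unfolding klin_def by simp
      then show False using a by simp
    qed
    have wsub: "{(i, j). i < M \<and> j < N \<and> w i j \<noteq> 0} \<subseteq> {(i, j). i < M \<and> j < N \<and> e i j \<noteq> 0}"
      using ene by auto
    have hw: "hamming_weight M N w \<le> card {(i, j). i < M \<and> j < N \<and> e i j \<noteq> 0}"
      unfolding hamming_weight_def by (rule card_mono[OF finE wsub])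
    have wnz: "w \<noteq> (\<lambda>i j. 0)" using w0 by (metis zero_neq_one)
    have "d \<le> hamming_weight M N w"
      unfolding dist min_distance_def by (rule Least_le) (use wC wnz in blast)
    then show False using hw tpos tbound by linarith
  qed
  have uniq: "X = Cv" if X: "X \<in> carrier_vec s'" "A *\<^sub>v X = B" for X
  proof (rule eq_vecI)
    show dX: "dim_vec X = dim_vec Cv" using X unfolding Cv_def by simp
    have "\<forall>k<s'. X $ k - Cv $ k = 0"
    proof (rule kernel, intro allI impI)
      fix l assume l: "l < t'"
      have Cvc: "Cv \<in> carrier_vec s'" unfolding Cv_def by simp
      have "(\<Sum>k<s'. A $$ (l, k) * (X $ k - Cv $ k)) = (A *\<^sub>v X) $ l - (A *\<^sub>v Cv) $ l"
        using Amul[OF l X(1)] Amul[OF l Cvc] by (simp add: right_diff_distrib sum_subtractf)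
      then show "(\<Sum>k<s'. A $$ (l, k) * (X $ k - Cv $ k)) = 0" using X(2) main2 by simp
    qed
    then show "X $ k = Cv $ k" if "k < dim_vec Cv" for k using that unfolding Cv_def by simp
  qed
  have "(\<exists>!X. X \<in> carrier_vec s' \<and> A *\<^sub>v X = B)"
    using uniq main2 unfolding Cv_def by (intro ex1I[of _ Cv]) (auto simp: Cv_def)
  then show ?thesis
    using main2 unfolding Let_def s'_def t'_def A_def B_def Rs_def Cs_def Cv_def by simp
qed

end
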